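(* Let $(X,Y)$ be a splitting of a finite Weyl group $W$ with simple roots $\Delta$. Then: (1) $X$ has a unique maximal element $x_0$ under left weak order and $Y$ has a unique maximal element $y_0$ under right weak order, and $x_0y_0=w_0$. (2) For every $J\subseteq\Delta$, $(X\cap W_J,\,Y\cap W_J)$ is a splitting of $W_J$.
   Context: $W$ is the Weyl group of a finite crystallographic root system with simple roots $\Delta$, generated by simple reflections $s_\alpha$; $\ell$ is Coxeter length and $w_0$ is the longest element. Left weak order: $v\leq_L w$ iff $w=zv$ with $\ell(w)=\ell(z)+\ell(v)$; right weak order: $v\leq_R w$ iff $w=vz$ with $\ell(w)=\ell(v)+\ell(z)$. For $J\subseteq\Delta$, $W_J$ is the parabolic subgroup generated by $\{s_\alpha:\alpha\in J\}$, with the restricted length function. A pair $(X,Y)$ of subsets of a group $G$ (here $W$ or $W_J$) is a splitting of $G$ if the map $X\times Y\to G$, $(x,y)\mapsto xy$, is a bijection with $\ell(xy)=\ell(x)+\ell(y)$ for all $x\in X$, $y\in Y$. *)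

theory Defs
  imports "HOL-Analysis.Analysis"
begin

definition refl_vec :: "'a::euclidean_space \<Rightarrow> 'a \<Rightarrow> 'a" where
  "refl_vec \<alpha> v = v - ((2 * (v \<bullet> \<alpha>)) / (\<alpha> \<bullet> \<alpha>)) *\<^sub>R \<alpha>"

definition root_system :: "'a::euclidean_space set \<Rightarrow> bool" where
  "root_system \<Phi> \<longleftrightarrow> finite \<Phi> \<and> 0 \<notin> \<Phi> \<and> span \<Phi> = UNIV
     \<and> (\<forall>\<alpha>\<in>\<Phi>. \<forall>\<beta>\<in>\<Phi>. refl_vec \<alpha> \<beta> \<in> \<Phi>)
     \<and> (\<forall>\<alpha>\<in>\<Phi>. \<forall>\<beta>\<in>\<Phi>. (2 * (\<beta> \<bullet> \<alpha>)) / (\<alpha> \<bullet> \<alpha>) \<in> \<int>)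
     \<and> (\<forall>\<alpha>\<in>\<Phi>. \<forall>c::real. c *\<^sub>R \<alpha> \<in> \<Phi> \<longrightarrow> c = 1 \<or> c = -1)"

definition simple_roots :: "'a::euclidean_space set \<Rightarrow> 'a set \<Rightarrow> bool" where
  "simple_roots \<Phi> \<Delta> \<longleftrightarrow> \<Delta> \<subseteq> \<Phi> \<and> independent \<Delta>
     \<and> (\<forall>\<beta>\<in>\<Phi>. \<exists>c::'a \<Rightarrow> real. \<beta> = (\<Sum>\<alpha>\<in>\<Delta>. c \<alpha> *\<^sub>R \<alpha>)
          \<and> ((\<forall>\<alpha>\<in>\<Delta>. c \<alpha> \<ge> 0) \<or> (\<forall>\<alpha>\<in>\<Delta>. c \<alpha> \<le> 0)))"

definition word_prod :: "'a::euclidean_space list \<Rightarrow> 'a \<Rightarrow> 'a" where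
  "word_prod ws = foldr (\<lambda>\<alpha> f. refl_vec \<alpha> \<circ> f) ws id"

text \<open>Group generated by the reflections s_alpha, alpha in S (W for S = Delta, W_J for S = J).\<close>
definition refl_group :: "'a::euclidean_space set \<Rightarrow> ('a \<Rightarrow> 'a) set" where
  "refl_group S = {word_prod ws | ws. set ws \<subseteq> S}"

definition cox_len :: "'a::euclidean_space set \<Rightarrow> ('a \<Rightarrow> 'a) \<Rightarrow> nat" where
  "cox_len \<Delta> w = (LEAST n. \<exists>ws. set ws \<subseteq> \<Delta> \<and> length ws = n \<and> w = word_prod ws)"

definition longest :: "'a::euclidean_space set \<Rightarrow> ('a \<Rightarrow> 'a)" where
  "longest \<Delta> = (THE w. w \<in> refl_group \<Delta> \<and> (\<forall>v\<in>refl_group \<Delta>. cox_len \<Delta> v \<le> cox_len \<Delta> w))"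

definition left_weak :: "'a::euclidean_space set \<Rightarrow> ('a \<Rightarrow> 'a) \<Rightarrow> ('a \<Rightarrow> 'a) \<Rightarrow> bool" where
  "left_weak \<Delta> v w \<longleftrightarrow> (\<exists>z\<in>refl_group \<Delta>. w = z \<circ> v \<and> cox_len \<Delta> w = cox_len \<Delta> z + cox_len \<Delta> v)"

definition right_weak :: "'a::euclidean_space set \<Rightarrow> ('a \<Rightarrow> 'a) \<Rightarrow> ('a \<Rightarrow> 'a) \<Rightarrow> bool" where
  "right_weak \<Delta> v w \<longleftrightarrow> (\<exists>z\<in>refl_group \<Delta>. w = v \<circ> z \<and> cox_len \<Delta> w = cox_len \<Delta> v + cox_len \<Delta> z)"

definition splitting :: "('b \<Rightarrow> 'b) set \<Rightarrow> (('b \<Rightarrow> 'b) \<Rightarrow> nat) \<Rightarrow> ('b \<Rightarrow> 'b) set \<Rightarrow> ('b \<Rightarrow> 'b) set \<Rightarrow> bool" where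
  "splitting G len X Y \<longleftrightarrow> X \<subseteq> G \<and> Y \<subseteq> G
     \<and> bij_betw (\<lambda>(x, y). x \<circ> y) (X \<times> Y) G
     \<and> (\<forall>x\<in>X. \<forall>y\<in>Y. len (x \<circ> y) = len x + len y)"

end

theory Submission imports Defs begin

lemma refl_vec_linear: "linear (refl_vec a)"
  unfolding refl_vec_def
  by (auto simp: linear_iff inner_add_left add_divide_distrib scaleR_add_left algebra_simps)

lemma refl_vec_self: "a \<noteq> 0 \<Longrightarrow> refl_vec a a = - a"
  by (simp add: refl_vec_def scaleR_2)

lemma refl_vec_invol: "a \<noteq> 0 \<Longrightarrow> refl_vec a (refl_vec a v) = v"
  unfolding refl_vec_def
  by (simp add: inner_diff_left algebra_simps field_simps)

lemma refl_vec_inner: "a \<noteq> 0 \<Longrightarrow> refl_vec a u \<bullet> refl_vec a v = u \<bullet> v"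
  unfolding refl_vec_def
  by (simp add: inner_diff_left inner_diff_right algebra_simps field_simps inner_commute)

lemma refl_vec_conj:
  assumes "linear u" "\<And>x y. u x \<bullet> u y = x \<bullet> y"
  shows "u (refl_vec a v) = refl_vec (u a) (u v)"
  unfolding refl_vec_def using assms
  by (simp add: linear_diff linear_scale)

lemma word_prod_Nil[simp]: "word_prod [] = id"
  by (simp add: word_prod_def)
lemma word_prod_Cons[simp]: "word_prod (a # ws) = refl_vec a \<circ> word_prod ws"
  by (simp add: word_prod_def)
lemma word_prod_append: "word_prod (xs @ ys) = word_prod xs \<circ> word_prod ys"
  by (induction xs) (auto simp: comp_assoc)

lemma word_prod_linear: "linear (word_prod ws)"
proof (induction ws)
  case Nil then show ?case by (simp add: id_def[symmetric] linear_id)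
next
  case (Cons a ws) then show ?case
    using linear_compose[OF Cons.IH refl_vec_linear[of a]] by (simp add: comp_def)
qed

lemma word_prod_inner: "0 \<notin> set ws \<Longrightarrow> word_prod ws x \<bullet> word_prod ws y = x \<bullet> y"
  by (induction ws arbitrary: x y) (auto simp: refl_vec_inner)


locale weyl =
  fixes \<Phi> \<Delta> :: "'a::euclidean_space set"
  assumes rs: "root_system \<Phi>" and sr: "simple_roots \<Phi> \<Delta>"
begin

lemma finPhi: "finite \<Phi>" using rs by (simp add: root_system_def)
lemma zPhi: "0 \<notin> \<Phi>" using rs by (simp add: root_system_def)
lemma DPhi: "\<Delta> \<subseteq> \<Phi>" using sr by (simp add: simple_roots_def)
lemma finD: "finite \<Delta>" using finPhi DPhi finite_subset by blast
lemma indD: "independent \<Delta>" using sr by (simp add: simple_roots_def)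
lemma zD: "0 \<notin> \<Delta>" using zPhi DPhi by blast
lemma reflPhi: "\<alpha> \<in> \<Phi> \<Longrightarrow> \<beta> \<in> \<Phi> \<Longrightarrow> refl_vec \<alpha> \<beta> \<in> \<Phi>"
  using rs by (simp add: root_system_def)
lemma reduced: "\<alpha> \<in> \<Phi> \<Longrightarrow> c *\<^sub>R \<alpha> \<in> \<Phi> \<Longrightarrow> c = 1 \<or> c = -1"
  using rs by (simp add: root_system_def)
lemma uminusPhi: "\<beta> \<in> \<Phi> \<Longrightarrow> - \<beta> \<in> \<Phi>"
proof -
  assume b: "\<beta> \<in> \<Phi>"
  then have "\<beta> \<noteq> 0" using zPhi by blast
  then show ?thesis using reflPhi[OF b b] refl_vec_self[of \<beta>] by simp
qed

definition coef :: "'a \<Rightarrow> 'a \<Rightarrow> real" where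
  "coef \<gamma> = (SOME g. linear g \<and> (\<forall>\<delta>\<in>\<Delta>. g \<delta> = (if \<delta> = \<gamma> then 1 else 0)))"

lemma coef_props: "linear (coef \<gamma>) \<and> (\<forall>\<delta>\<in>\<Delta>. coef \<gamma> \<delta> = (if \<delta> = \<gamma> then 1 else 0))"
proof -
  have "\<exists>g::'a\<Rightarrow>real. linear g \<and> (\<forall>\<delta>\<in>\<Delta>. g \<delta> = (if \<delta> = \<gamma> then 1 else 0))"
    by (rule linear_independent_extend[OF indD])
  then show ?thesis unfolding coef_def by (rule someI_ex)
qed

lemma coef_linear: "linear (coef \<gamma>)" using coef_props by blast
lemma coef_D: "\<delta> \<in> \<Delta> \<Longrightarrow> coef \<gamma> \<delta> = (if \<delta> = \<gamma> then 1 else 0)" using coef_props by blast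

lemma coef_sum: "\<gamma> \<in> \<Delta> \<Longrightarrow> coef \<gamma> (\<Sum>\<delta>\<in>\<Delta>. c \<delta> *\<^sub>R \<delta>) = c \<gamma>"
proof -
  assume g: "\<gamma> \<in> \<Delta>"
  have "coef \<gamma> (\<Sum>\<delta>\<in>\<Delta>. c \<delta> *\<^sub>R \<delta>) = (\<Sum>\<delta>\<in>\<Delta>. c \<delta> * coef \<gamma> \<delta>)"
    by (simp add: linear_sum[OF coef_linear] linear_scale[OF coef_linear])
  also have "\<dots> = (\<Sum>\<delta>\<in>\<Delta>. if \<delta> = \<gamma> then c \<gamma> else 0)"
    by (rule sum.cong) (auto simp: coef_D)
  also have "\<dots> = c \<gamma>" using finD g by simp
  finally show ?thesis .
qed

lemma coef_diff: "coef \<gamma> (x - y) = coef \<gamma> x - coef \<gamma> y"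
  using linear_diff[OF coef_linear] by blast
lemma coef_scale: "coef \<gamma> (c *\<^sub>R x) = c * coef \<gamma> x"
  using linear_scale[OF coef_linear] by simp
lemma coef_uminus: "coef \<gamma> (- x) = - coef \<gamma> x"
  using linear_neg[OF coef_linear] by blast

lemma root_rep: "\<beta> \<in> \<Phi> \<Longrightarrow> \<exists>c. \<beta> = (\<Sum>\<alpha>\<in>\<Delta>. c \<alpha> *\<^sub>R \<alpha>)
          \<and> ((\<forall>\<alpha>\<in>\<Delta>. c \<alpha> \<ge> 0) \<or> (\<forall>\<alpha>\<in>\<Delta>. c \<alpha> \<le> 0))"
  using sr by (simp add: simple_roots_def)

lemma root_decomp: "\<beta> \<in> \<Phi> \<Longrightarrow> \<beta> = (\<Sum>\<gamma>\<in>\<Delta>. coef \<gamma> \<beta> *\<^sub>R \<gamma>)"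
proof -
  assume "\<beta> \<in> \<Phi>"
  then obtain c where c: "\<beta> = (\<Sum>\<alpha>\<in>\<Delta>. c \<alpha> *\<^sub>R \<alpha>)" using root_rep by blast
  then have "\<And>\<gamma>. \<gamma> \<in> \<Delta> \<Longrightarrow> coef \<gamma> \<beta> = c \<gamma>" using coef_sum by simp
  then have "(\<Sum>\<gamma>\<in>\<Delta>. coef \<gamma> \<beta> *\<^sub>R \<gamma>) = (\<Sum>\<gamma>\<in>\<Delta>. c \<gamma> *\<^sub>R \<gamma>)"
    by (intro sum.cong) auto
  then show ?thesis using c by simp
qed

definition pos where "pos \<beta> \<longleftrightarrow> \<beta> \<in> \<Phi> \<and> (\<forall>\<gamma>\<in>\<Delta>. coef \<gamma> \<beta> \<ge> 0)"
definition neg where "neg \<beta> \<longleftrightarrow> \<beta> \<in> \<Phi> \<and> (\<forall>\<gamma>\<in>\<Delta>. coef \<gamma> \<beta> \<le> 0)"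

lemma pos_or_neg: "\<beta> \<in> \<Phi> \<Longrightarrow> pos \<beta> \<or> neg \<beta>"
proof -
  assume b: "\<beta> \<in> \<Phi>"
  then obtain c where c: "\<beta> = (\<Sum>\<alpha>\<in>\<Delta>. c \<alpha> *\<^sub>R \<alpha>)" "((\<forall>\<alpha>\<in>\<Delta>. c \<alpha> \<ge> 0) \<or> (\<forall>\<alpha>\<in>\<Delta>. c \<alpha> \<le> 0))"
    using root_rep by blast
  then have "\<And>\<gamma>. \<gamma> \<in> \<Delta> \<Longrightarrow> coef \<gamma> \<beta> = c \<gamma>" using coef_sum by simp
  then show ?thesis using c(2) b unfolding pos_def neg_def by auto
qed

lemma not_pos_neg: "pos \<beta> \<Longrightarrow> neg \<beta> \<Longrightarrow> False"
proof -
  assume "pos \<beta>" "neg \<beta>"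
  then have "\<forall>\<gamma>\<in>\<Delta>. coef \<gamma> \<beta> = 0" "\<beta> \<in> \<Phi>" unfolding pos_def neg_def by force+
  then have "\<beta> = 0" using root_decomp[of \<beta>] by simp
  then show False using \<open>\<beta> \<in> \<Phi>\<close> zPhi by simp
qed

lemma neg_uminus: "neg (- \<beta>) \<longleftrightarrow> pos \<beta>"
proof -
  have "- \<beta> \<in> \<Phi> \<longleftrightarrow> \<beta> \<in> \<Phi>" using uminusPhi[of \<beta>] uminusPhi[of "-\<beta>"] by auto
  moreover have "(\<forall>\<gamma>\<in>\<Delta>. coef \<gamma> (- \<beta>) \<le> 0) \<longleftrightarrow> (\<forall>\<gamma>\<in>\<Delta>. coef \<gamma> \<beta> \<ge> 0)"
    by (simp add: coef_uminus)
  ultimately show ?thesis unfolding pos_def neg_def by blast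
qed
lemma pos_uminus: "pos (- \<beta>) \<longleftrightarrow> neg \<beta>"
  using neg_uminus[of "-\<beta>"] by simp

lemma pos_D: "\<alpha> \<in> \<Delta> \<Longrightarrow> pos \<alpha>"
  unfolding pos_def using DPhi by (auto simp: coef_D)

lemma key:
  assumes a: "a \<in> \<Delta>" and b: "pos \<beta>" and ne: "\<beta> \<noteq> a"
  shows "pos (refl_vec a \<beta>)"
proof -
  have bP: "\<beta> \<in> \<Phi>" using b pos_def by blast
  have aP: "a \<in> \<Phi>" using a DPhi by blast
  have "\<exists>\<gamma>\<in>\<Delta>. \<gamma> \<noteq> a \<and> coef \<gamma> \<beta> > 0"
  proof (rule ccontr)
    assume "\<not> ?thesis"
    then have z: "\<forall>\<gamma>\<in>\<Delta>. \<gamma> \<noteq> a \<longrightarrow> coef \<gamma> \<beta> = 0" using b unfolding pos_def by force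
    have "\<beta> = (\<Sum>\<gamma>\<in>\<Delta>. coef \<gamma> \<beta> *\<^sub>R \<gamma>)" using root_decomp bP by blast
    also have "\<dots> = (\<Sum>\<gamma>\<in>\<Delta>. if \<gamma> = a then coef a \<beta> *\<^sub>R a else 0)"
      by (rule sum.cong) (auto simp: z)
    also have "\<dots> = coef a \<beta> *\<^sub>R a" using a finD by simp
    finally have e: "\<beta> = coef a \<beta> *\<^sub>R a" .
    then have "coef a \<beta> = 1 \<or> coef a \<beta> = -1" using reduced[OF aP] bP by metis
    moreover have "coef a \<beta> \<ge> 0" using b a pos_def by blast
    ultimately have "coef a \<beta> = 1" by linarith
    then show False using e ne by simp
  qed
  then obtain \<gamma> where g: "\<gamma> \<in> \<Delta>" "\<gamma> \<noteq> a" "coef \<gamma> \<beta> > 0" by blast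
  have "coef \<gamma> (refl_vec a \<beta>) = coef \<gamma> \<beta>"
    unfolding refl_vec_def using g a by (simp add: coef_diff coef_scale coef_D)
  then have "\<not> neg (refl_vec a \<beta>)" using g neg_def by force
  then show ?thesis using pos_or_neg reflPhi[OF aP bP] by blast
qed


abbreviation W where "W \<equiv> refl_group \<Delta>"
abbreviation len where "len \<equiv> cox_len \<Delta>"

lemma W_iff: "w \<in> refl_group S \<longleftrightarrow> (\<exists>ws. set ws \<subseteq> S \<and> w = word_prod ws)"
  unfolding refl_group_def by blast

lemma W_obtain: "w \<in> refl_group T \<Longrightarrow> (\<And>ws. set ws \<subseteq> T \<Longrightarrow> w = word_prod ws \<Longrightarrow> P) \<Longrightarrow> P"
  unfolding refl_group_def by blast

lemma wp_Phi: "set ws \<subseteq> \<Delta> \<Longrightarrow> \<beta> \<in> \<Phi> \<Longrightarrow> word_prod ws \<beta> \<in> \<Phi>"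
proof (induction ws)
  case (Cons a ws)
  then have "a \<in> \<Phi>" "word_prod ws \<beta> \<in> \<Phi>" using DPhi by auto
  then show ?case using reflPhi by simp
qed simp

lemma wp_inner: "set ws \<subseteq> \<Delta> \<Longrightarrow> word_prod ws x \<bullet> word_prod ws y = x \<bullet> y"
  by (rule word_prod_inner) (use zD in blast)

lemma wp_uminus: "word_prod ws (- x) = - word_prod ws x"
  using linear_neg[OF word_prod_linear] by blast

lemma refl_invol_D: "a \<in> \<Delta> \<Longrightarrow> refl_vec a (refl_vec a v) = v"
  by (rule refl_vec_invol) (use zD in blast)
lemma refl_self_D: "a \<in> \<Delta> \<Longrightarrow> refl_vec a a = - a"
  by (rule refl_vec_self) (use zD in blast)
lemma refl_comp_D: "a \<in> \<Delta> \<Longrightarrow> refl_vec a \<circ> refl_vec a = id"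
  by (simp add: fun_eq_iff refl_invol_D)

lemma wp_rev: "set ws \<subseteq> \<Delta> \<Longrightarrow> word_prod ws \<circ> word_prod (rev ws) = id \<and> word_prod (rev ws) \<circ> word_prod ws = id"
proof (induction ws)
  case Nil then show ?case by simp
next
  case (Cons a ws)
  have a: "a \<in> \<Delta>" and ws: "set ws \<subseteq> \<Delta>" using Cons.prems by auto
  have IH: "word_prod ws \<circ> word_prod (rev ws) = id" "word_prod (rev ws) \<circ> word_prod ws = id"
    using Cons.IH[OF ws] by blast+
  have "word_prod (a # ws) \<circ> word_prod (rev (a # ws)) = refl_vec a \<circ> (word_prod ws \<circ> word_prod (rev ws)) \<circ> refl_vec a"
    by (simp add: word_prod_append comp_assoc)
  also have "\<dots> = id" using IH refl_comp_D[OF a] by simp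
  finally have 1: "word_prod (a # ws) \<circ> word_prod (rev (a # ws)) = id" .
  have "word_prod (rev (a # ws)) \<circ> word_prod (a # ws) = word_prod (rev ws) \<circ> (refl_vec a \<circ> refl_vec a) \<circ> word_prod ws"
    by (simp add: word_prod_append comp_assoc)
  also have "\<dots> = id" using IH refl_comp_D[OF a] by simp
  finally show ?case using 1 by blast
qed

definition S where "S w = {\<beta>. pos \<beta> \<and> neg (w \<beta>)}"
definition n where "n w = card (S w)"

lemma finS: "finite (S w)"
  by (rule finite_subset[OF _ finPhi]) (auto simp: S_def pos_def)

lemma S_id: "S id = {}" using not_pos_neg by (auto simp: S_def)

lemma neg_a: "a \<in> \<Delta> \<Longrightarrow> \<not> pos (- a)"
  using pos_D not_pos_neg pos_uminus by blast

lemma S_step: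
  assumes ws: "set ws \<subseteq> \<Delta>" and a: "a \<in> \<Delta>"
  shows "S (word_prod ws \<circ> refl_vec a) - {a} = refl_vec a ` (S (word_prod ws) - {a})"
proof (rule equalityI; rule subsetI)
  fix \<beta> assume "\<beta> \<in> S (word_prod ws \<circ> refl_vec a) - {a}"
  then have b: "\<beta> \<in> S (word_prod ws \<circ> refl_vec a)" "\<beta> \<noteq> a" by auto
  then have p: "pos \<beta>" and nn: "neg (word_prod ws (refl_vec a \<beta>))" by (auto simp: S_def)
  have p': "pos (refl_vec a \<beta>)" using key[OF a p b(2)] .
  have "refl_vec a \<beta> \<noteq> a"
  proof
    assume "refl_vec a \<beta> = a"
    then have "\<beta> = - a" using refl_invol_D[OF a, of \<beta>] refl_self_D[OF a] by metis
    then show False using p neg_a[OF a] by simp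
  qed
  then have "refl_vec a \<beta> \<in> S (word_prod ws) - {a}" using p' nn by (auto simp: S_def)
  moreover have "\<beta> = refl_vec a (refl_vec a \<beta>)" using refl_invol_D[OF a] by simp
  ultimately show "\<beta> \<in> refl_vec a ` (S (word_prod ws) - {a})" by blast
next
  fix \<gamma> assume "\<gamma> \<in> refl_vec a ` (S (word_prod ws) - {a})"
  then obtain \<beta> where g: "\<gamma> = refl_vec a \<beta>" and b: "\<beta> \<in> S (word_prod ws)" "\<beta> \<noteq> a" by auto
  then have p: "pos \<beta>" and nn: "neg (word_prod ws \<beta>)" by (auto simp: S_def)
  have "\<gamma> \<noteq> a"
  proof
    assume "\<gamma> = a"
    then have "\<beta> = - a" using g refl_invol_D[OF a, of \<beta>] refl_self_D[OF a] by metis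
    then show False using p neg_a[OF a] by simp
  qed
  moreover have "\<gamma> \<in> S (word_prod ws \<circ> refl_vec a)"
    using key[OF a p b(2)] nn refl_invol_D[OF a] g by (auto simp: S_def)
  ultimately show "\<gamma> \<in> S (word_prod ws \<circ> refl_vec a) - {a}" by blast
qed

lemma card_split: assumes "finite A" shows "card A = card (A - {a}) + (if a \<in> A then 1 else 0)"
proof (cases "a \<in> A")
  case True then show ?thesis using card_Suc_Diff1[OF assms True] by simp
next
  case False then show ?thesis by simp
qed

lemma n_step:
  assumes ws: "set ws \<subseteq> \<Delta>" and a: "a \<in> \<Delta>"
  shows "pos (word_prod ws a) \<Longrightarrow> n (word_prod ws \<circ> refl_vec a) = n (word_prod ws) + 1"
    and "neg (word_prod ws a) \<Longrightarrow> n (word_prod ws \<circ> refl_vec a) + 1 = n (word_prod ws)"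
proof -
  let ?w = "word_prod ws"
  have c: "card (S (?w \<circ> refl_vec a) - {a}) = card (S ?w - {a})"
    unfolding S_step[OF ws a]
  proof (rule card_image)
    show "inj_on (refl_vec a) (S ?w - {a})"
      by (rule inj_on_inverseI[where g="refl_vec a"]) (simp add: refl_invol_D[OF a])
  qed
  have i1: "a \<in> S (?w \<circ> refl_vec a) \<longleftrightarrow> pos (?w a)"
    using pos_D[OF a] by (simp add: S_def refl_self_D[OF a] wp_uminus neg_uminus)
  have i2: "a \<in> S ?w \<longleftrightarrow> neg (?w a)"
    using pos_D[OF a] by (simp add: S_def)
  have e1: "n (?w \<circ> refl_vec a) = card (S (?w \<circ> refl_vec a) - {a}) + (if a \<in> S (?w \<circ> refl_vec a) then 1 else 0)"
    unfolding n_def by (rule card_split[OF finS])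
  have e2: "n ?w = card (S ?w - {a}) + (if a \<in> S ?w then 1 else 0)"
    unfolding n_def by (rule card_split[OF finS])
  show "pos (?w a) \<Longrightarrow> n (?w \<circ> refl_vec a) = n ?w + 1"
  proof -
    assume p: "pos (?w a)"
    then have "\<not> neg (?w a)" using not_pos_neg by blast
    then show ?thesis using e1 e2 c i1 i2 p by simp
  qed
  show "neg (?w a) \<Longrightarrow> n (?w \<circ> refl_vec a) + 1 = n ?w"
  proof -
    assume p: "neg (?w a)"
    then have "\<not> pos (?w a)" using not_pos_neg by blast
    then show ?thesis using e1 e2 c i1 i2 p by simp
  qed
qed

lemma wa_Phi: "set ws \<subseteq> \<Delta> \<Longrightarrow> a \<in> \<Delta> \<Longrightarrow> pos (word_prod ws a) \<or> neg (word_prod ws a)"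
  using pos_or_neg wp_Phi DPhi by blast

lemma n_step':
  assumes ws: "set ws \<subseteq> \<Delta>" and a: "a \<in> \<Delta>"
  shows "pos (word_prod ws a) \<Longrightarrow> n (word_prod (ws @ [a])) = n (word_prod ws) + 1"
    and "neg (word_prod ws a) \<Longrightarrow> n (word_prod (ws @ [a])) + 1 = n (word_prod ws)"
  using n_step[OF ws a] by (simp_all only: word_prod_append word_prod_Cons word_prod_Nil comp_id)

lemma n_le: "set ws \<subseteq> \<Delta> \<Longrightarrow> n (word_prod ws) \<le> length ws"
proof (induction ws rule: rev_induct)
  case Nil then show ?case by (simp only: word_prod_Nil n_def S_id) simp
next
  case (snoc a ws)
  then have ws: "set ws \<subseteq> \<Delta>" and a: "a \<in> \<Delta>" by auto
  show ?case using wa_Phi[OF ws a] n_step'[OF ws a] snoc.IH[OF ws]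
    by fastforce
qed

lemma deletion:
  "set ws \<subseteq> \<Delta> \<Longrightarrow> a \<in> \<Delta> \<Longrightarrow> neg (word_prod ws a) \<Longrightarrow>
   \<exists>ws'. set ws' \<subseteq> \<Delta> \<and> length ws' + 1 = length ws \<and> word_prod ws' = word_prod ws \<circ> refl_vec a"
proof (induction ws)
  case Nil then show ?case using pos_D not_pos_neg by auto
next
  case (Cons b ws)
  then have ws: "set ws \<subseteq> \<Delta>" and b: "b \<in> \<Delta>" and a: "a \<in> \<Delta>" by auto
  let ?r = "word_prod ws a"
  show ?case
  proof (cases "neg ?r")
    case True
    then obtain ws' where "set ws' \<subseteq> \<Delta>" "length ws' + 1 = length ws" "word_prod ws' = word_prod ws \<circ> refl_vec a"
      using Cons.IH[OF ws a] by blast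
    then show ?thesis by (intro exI[of _ "b # ws'"]) (auto simp: b comp_assoc)
  next
    case False
    then have p: "pos ?r" using wa_Phi[OF ws a] by blast
    have "?r = b"
    proof (rule ccontr)
      assume "?r \<noteq> b"
      then have "pos (refl_vec b ?r)" using key[OF b p] by blast
      then show False using Cons.prems(3) not_pos_neg by simp
    qed
    have "\<And>x. word_prod ws (refl_vec a x) = refl_vec ?r (word_prod ws x)"
      using refl_vec_conj[OF word_prod_linear wp_inner[OF ws]] by blast
    then have "\<And>x. refl_vec b (word_prod ws (refl_vec a x)) = word_prod ws x"
      using \<open>?r = b\<close> refl_invol_D[OF b] by simp
    then have e: "word_prod ws = word_prod (b # ws) \<circ> refl_vec a" by (simp add: fun_eq_iff)
    have "length ws + 1 = length (b # ws)" by simp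
    then show ?thesis using ws e by blast
  qed
qed

lemma n_ge: "set ws \<subseteq> \<Delta> \<Longrightarrow> \<exists>ws'. set ws' \<subseteq> \<Delta> \<and> word_prod ws' = word_prod ws \<and> length ws' \<le> n (word_prod ws)"
proof (induction ws rule: rev_induct)
  case Nil then show ?case by (intro exI[of _ "[]"]) simp
next
  case (snoc a ws)
  then have ws: "set ws \<subseteq> \<Delta>" and a: "a \<in> \<Delta>" by auto
  obtain ws0 where w0: "set ws0 \<subseteq> \<Delta>" "word_prod ws0 = word_prod ws" "length ws0 \<le> n (word_prod ws)"
    using snoc.IH[OF ws] by blast
  show ?case
  proof (cases "pos (word_prod ws a)")
    case True
    have "word_prod (ws0 @ [a]) = word_prod (ws @ [a])" using w0(2) by (simp only: word_prod_append)
    moreover have "length (ws0 @ [a]) \<le> n (word_prod (ws @ [a]))" using n_step'(1)[OF ws a True] w0 by simp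
    ultimately show ?thesis using w0 a by (intro exI[of _ "ws0 @ [a]"]) simp
  next
    case False
    then have ng: "neg (word_prod ws0 a)" using wa_Phi[OF ws a] w0 by simp
    obtain ws1 where ws1: "set ws1 \<subseteq> \<Delta>" "length ws1 + 1 = length ws0" "word_prod ws1 = word_prod ws0 \<circ> refl_vec a"
      using deletion[OF w0(1) a ng] by blast
    have "word_prod ws1 = word_prod (ws @ [a])" using ws1(3) w0(2) by (simp only: word_prod_append word_prod_Cons word_prod_Nil comp_id)
    moreover have "n (word_prod (ws @ [a])) + 1 = n (word_prod ws)"
      using n_step'(2)[OF ws a] False wa_Phi[OF ws a] by blast
    ultimately show ?thesis using ws1 w0 by (intro exI[of _ ws1]) simp
  qed
qed

lemma len_eq: "set ws \<subseteq> \<Delta> \<Longrightarrow> len (word_prod ws) = n (word_prod ws)"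
proof -
  assume ws: "set ws \<subseteq> \<Delta>"
  obtain ws' where w': "set ws' \<subseteq> \<Delta>" "word_prod ws' = word_prod ws" "length ws' \<le> n (word_prod ws)"
    using n_ge[OF ws] by blast
  have "length ws' = n (word_prod ws)" using n_le[OF w'(1)] w' by simp
  show ?thesis unfolding cox_len_def
  proof (rule Least_equality)
    show "\<exists>vs. set vs \<subseteq> \<Delta> \<and> length vs = n (word_prod ws) \<and> word_prod ws = word_prod vs"
      using w' \<open>length ws' = _\<close> by metis
  next
    fix m assume "\<exists>vs. set vs \<subseteq> \<Delta> \<and> length vs = m \<and> word_prod ws = word_prod vs"
    then show "n (word_prod ws) \<le> m" using n_le by metis
  qed
qed


lemma len_word: "w \<in> W \<Longrightarrow> \<exists>ws. set ws \<subseteq> \<Delta> \<and> length ws = len w \<and> w = word_prod ws"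
proof -
  assume "w \<in> W"
  then obtain ws where ws: "set ws \<subseteq> \<Delta>" "w = word_prod ws" unfolding W_iff by blast
  show ?thesis unfolding cox_len_def
    by (rule LeastI_ex) (use ws in blast)
qed

lemma len_le_word: "set ws \<subseteq> \<Delta> \<Longrightarrow> len (word_prod ws) \<le> length ws"
proof -
  assume ws: "set ws \<subseteq> \<Delta>"
  show ?thesis using len_eq[OF ws] n_le[OF ws] by simp
qed

lemma len_n: "w \<in> W \<Longrightarrow> len w = n w"
proof -
  assume "w \<in> W"
  then obtain ws where ws: "set ws \<subseteq> \<Delta>" "w = word_prod ws" unfolding W_iff by blast
  show ?thesis using len_eq[OF ws(1)] ws(2) by simp
qed

lemma W_comp: "u \<in> refl_group T \<Longrightarrow> v \<in> refl_group T \<Longrightarrow> u \<circ> v \<in> refl_group T"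
proof -
  assume u: "u \<in> refl_group T" and v: "v \<in> refl_group T"
  obtain us where "set us \<subseteq> T" "u = word_prod us" using W_obtain[OF u] by blast
  moreover obtain vs where "set vs \<subseteq> T" "v = word_prod vs" using W_obtain[OF v] by blast
  ultimately have "set (us @ vs) \<subseteq> T" "u \<circ> v = word_prod (us @ vs)" by (simp_all add: word_prod_append)
  then show ?thesis unfolding refl_group_def by blast
qed

lemma W_refl: "a \<in> T \<Longrightarrow> refl_vec a \<in> refl_group T"
proof -
  assume "a \<in> T"
  then have "set [a] \<subseteq> T" "refl_vec a = word_prod [a]" by simp_all
  then show ?thesis unfolding refl_group_def by blast
qed

lemma W_id: "id \<in> refl_group T"
proof -
  have "set [] \<subseteq> T" "id = word_prod []" by simp_all
  then show ?thesis unfolding refl_group_def by blast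
qed

lemma W_mono: "J \<subseteq> \<Delta> \<Longrightarrow> refl_group J \<subseteq> W"
  unfolding refl_group_def by blast

lemma W_inv: assumes "u \<in> refl_group T" "T \<subseteq> \<Delta>"
  shows "inv u \<in> refl_group T \<and> u \<circ> inv u = id \<and> inv u \<circ> u = id \<and> bij u"
proof -
  obtain ws where ws: "set ws \<subseteq> T" "u = word_prod ws" using W_obtain[OF assms(1)] by blast
  have "set ws \<subseteq> \<Delta>" using ws(1) assms(2) by (rule order_trans)
  then have r: "u \<circ> word_prod (rev ws) = id" "word_prod (rev ws) \<circ> u = id" using wp_rev ws(2) by simp_all
  then have "inv u = word_prod (rev ws)" by (rule inv_unique_comp)
  moreover have "word_prod (rev ws) \<in> refl_group T" unfolding refl_group_def using ws(1) by force
  moreover have "bij u" using o_bij[OF r(2) r(1)] .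
  ultimately show ?thesis using r by simp
qed

lemma len_inv_le: "u \<in> W \<Longrightarrow> len (inv u) \<le> len u"
proof -
  assume u: "u \<in> W"
  obtain ws where ws: "set ws \<subseteq> \<Delta>" "length ws = len u" "u = word_prod ws" using len_word[OF u] by blast
  then have "u \<circ> word_prod (rev ws) = id" "word_prod (rev ws) \<circ> u = id" using wp_rev[OF ws(1)] by simp_all
  then have "inv u = word_prod (rev ws)" by (rule inv_unique_comp)
  moreover have "len (word_prod (rev ws)) \<le> length (rev ws)" by (rule len_le_word) (use ws(1) in simp)
  ultimately show ?thesis using ws(2) by simp
qed

lemma len_inv: "u \<in> W \<Longrightarrow> len (inv u) = len u"
proof -
  assume u: "u \<in> W"
  have i: "inv u \<in> W" "bij u" using W_inv[OF u order_refl] by auto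
  show ?thesis using len_inv_le[OF u] len_inv_le[OF i(1)] inv_inv_eq[OF i(2)] by simp
qed

lemma len_zero: "w \<in> W \<Longrightarrow> len w = 0 \<Longrightarrow> w = id"
proof -
  assume w: "w \<in> W" and z: "len w = 0"
  obtain ws where "length ws = len w" "w = word_prod ws" using len_word[OF w] by blast
  then show ?thesis using z by simp
qed

definition Pp where "Pp = {\<beta>. pos \<beta>}"
definition NN where "NN = card Pp"
lemma finPp: "finite Pp" by (rule finite_subset[OF _ finPhi]) (auto simp: Pp_def pos_def)
lemma S_Pp: "S w \<subseteq> Pp" by (auto simp: S_def Pp_def)
lemma n_NN: "n w \<le> NN" unfolding n_def NN_def by (rule card_mono[OF finPp S_Pp])
lemma n_id: "n id = 0" by (simp add: n_def S_id)

definition Lp where "Lp w \<longleftrightarrow> (\<forall>\<beta>. pos \<beta> \<longrightarrow> neg (w \<beta>))"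

lemma W_Phi: "w \<in> W \<Longrightarrow> \<beta> \<in> \<Phi> \<Longrightarrow> w \<beta> \<in> \<Phi>"
  by (erule W_obtain) (simp add: wp_Phi)
lemma W_linear: "w \<in> W \<Longrightarrow> linear w"
  by (erule W_obtain) (simp add: word_prod_linear)

lemma Lp_n:
  assumes w: "w \<in> W" "Lp w" and v: "v \<in> W"
  shows "n (w \<circ> v) + n v = NN"
proof -
  have "S (w \<circ> v) = Pp - S v"
  proof (rule set_eqI)
    fix \<beta>
    show "\<beta> \<in> S (w \<circ> v) \<longleftrightarrow> \<beta> \<in> Pp - S v"
    proof (cases "pos \<beta>")
      case True
      then have vb: "v \<beta> \<in> \<Phi>" using W_Phi[OF v] pos_def by blast
      show ?thesis
      proof (cases "pos (v \<beta>)")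
        case True
        then show ?thesis using \<open>pos \<beta>\<close> w(2) not_pos_neg unfolding S_def Pp_def Lp_def by auto
      next
        case False
        then have nv: "neg (v \<beta>)" using pos_or_neg vb by blast
        then have "pos (- v \<beta>)" using pos_uminus by blast
        then have "neg (w (- v \<beta>))" using w(2) Lp_def by blast
        then have "pos (w (v \<beta>))" using linear_neg[OF W_linear[OF w(1)]] neg_uminus by metis
        then have "\<not> neg (w (v \<beta>))" using not_pos_neg by blast
        then show ?thesis using nv \<open>pos \<beta>\<close> unfolding S_def Pp_def by auto
      qed
    next
      case False
      then show ?thesis unfolding S_def Pp_def by auto
    qed
  qed
  then have "n (w \<circ> v) = card Pp - card (S v)" unfolding n_def using card_Diff_subset[OF finS S_Pp] by simp
  moreover have "card (S v) \<le> card Pp" by (rule card_mono[OF finPp S_Pp])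
  ultimately show ?thesis unfolding n_def NN_def by simp
qed

lemma maxlen_Lp:
  assumes w: "w \<in> W" and mx: "\<forall>v\<in>W. len v \<le> len w"
  shows "Lp w"
proof -
  obtain ws where ws: "set ws \<subseteq> \<Delta>" "w = word_prod ws" using W_obtain[OF w] by blast
  have na: "neg (w a)" if a: "a \<in> \<Delta>" for a
  proof (rule ccontr)
    assume "\<not> neg (w a)"
    then have "pos (word_prod ws a)" using wa_Phi[OF ws(1) a] ws by blast
    then have "n (word_prod (ws @ [a])) = n w + 1" using n_step'(1)[OF ws(1) a] ws by simp
    moreover have "word_prod (ws @ [a]) \<in> W" unfolding refl_group_def using ws a by force
    ultimately show False using mx len_n w by fastforce
  qed
  show ?thesis unfolding Lp_def
  proof (intro allI impI)
    fix \<beta> assume b: "pos \<beta>"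
    then have bP: "\<beta> \<in> \<Phi>" by (simp add: pos_def)
    have "w \<beta> = w (\<Sum>\<gamma>\<in>\<Delta>. coef \<gamma> \<beta> *\<^sub>R \<gamma>)" using root_decomp[OF bP] by simp
    also have "\<dots> = (\<Sum>\<gamma>\<in>\<Delta>. coef \<gamma> \<beta> *\<^sub>R w \<gamma>)"
      by (simp add: linear_sum[OF W_linear[OF w]] linear_scale[OF W_linear[OF w]])
    finally have e: "w \<beta> = (\<Sum>\<gamma>\<in>\<Delta>. coef \<gamma> \<beta> *\<^sub>R w \<gamma>)" .
    have "coef \<delta> (w \<beta>) \<le> 0" if d: "\<delta> \<in> \<Delta>" for \<delta>
    proof -
      have "coef \<delta> (w \<beta>) = (\<Sum>\<gamma>\<in>\<Delta>. coef \<gamma> \<beta> * coef \<delta> (w \<gamma>))"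
        unfolding e by (simp add: linear_sum[OF coef_linear] coef_scale)
      also have "\<dots> \<le> 0"
      proof (rule sum_nonpos)
        fix \<gamma> assume g: "\<gamma> \<in> \<Delta>"
        have "coef \<gamma> \<beta> \<ge> 0" using b g pos_def by blast
        moreover have "coef \<delta> (w \<gamma>) \<le> 0" using na[OF g] d neg_def by blast
        ultimately show "coef \<gamma> \<beta> * coef \<delta> (w \<gamma>) \<le> 0" by (rule mult_nonneg_nonpos)
      qed
      finally show ?thesis .
    qed
    then show "neg (w \<beta>)" unfolding neg_def using W_Phi[OF w bP] by blast
  qed
qed

lemma Lp_NN: "w \<in> W \<Longrightarrow> Lp w \<Longrightarrow> n w = NN"
proof -
  assume w: "w \<in> W" "Lp w"
  have "n (w \<circ> id) + n id = NN" by (rule Lp_n[OF w W_id])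
  then show ?thesis by (simp add: n_id)
qed

lemma Lp_unique:
  assumes w: "w \<in> W" "Lp w" and w': "w' \<in> W" "Lp w'"
  shows "w = w'"
proof -
  have iw: "inv w \<in> W" "w \<circ> inv w = id" using W_inv[OF w(1) order_refl] by auto
  define v where "v = inv w \<circ> w'"
  have v: "v \<in> W" unfolding v_def using W_comp iw w' by blast
  have wv: "w \<circ> v = w'" unfolding v_def using iw by (simp add: comp_assoc[symmetric])
  have "n v = 0" using Lp_n[OF w v] Lp_NN[OF w'] wv by simp
  then have "v = id" using len_zero[OF v] len_n[OF v] by simp
  then show ?thesis using wv by simp
qed

lemma max_exists: "\<exists>w\<in>W. \<forall>v\<in>W. len v \<le> len w"
proof -
  have fin: "finite (len ` W)"
    by (rule finite_subset[of _ "{..NN}"]) (auto simp: len_n n_NN)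
  have ne: "len ` W \<noteq> {}" using W_id by blast
  obtain w where w: "w \<in> W" "len w = Max (len ` W)" using Max_in[OF fin ne] by auto
  have "\<forall>v\<in>W. len v \<le> len w" using Max_ge[OF fin] w(2) by simp
  then show ?thesis using w(1) by blast
qed

lemma longest_props: "longest \<Delta> \<in> W \<and> Lp (longest \<Delta>) \<and> (\<forall>v\<in>W. len v \<le> len (longest \<Delta>))"
proof -
  obtain w0 where w0: "w0 \<in> W" "\<forall>v\<in>W. len v \<le> len w0" using max_exists by blast
  have "longest \<Delta> = w0" unfolding longest_def
  proof (rule the_equality)
    show "w0 \<in> W \<and> (\<forall>v\<in>W. len v \<le> len w0)" using w0 by blast
  next
    fix w assume w: "w \<in> W \<and> (\<forall>v\<in>W. len v \<le> len w)"
    then have "Lp w" using maxlen_Lp by blast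
    then show "w = w0" using Lp_unique w maxlen_Lp[OF w0] w0 by blast
  qed
  then show ?thesis using w0 maxlen_Lp[OF w0] by simp
qed

lemma len_w0_left: "v \<in> W \<Longrightarrow> len (longest \<Delta> \<circ> v) + len v = len (longest \<Delta>)"
  using longest_props Lp_n Lp_NN len_n W_comp by metis

lemma len_w0_right: assumes v: "v \<in> W" shows "len (v \<circ> longest \<Delta>) + len v = len (longest \<Delta>)"
proof -
  let ?w = "longest \<Delta>"
  have w: "?w \<in> W" "\<forall>u\<in>W. len u \<le> len ?w" using longest_props by auto
  have iw: "inv ?w \<in> W" "bij ?w" using W_inv[OF w(1) order_refl] by auto
  have iv: "inv v \<in> W" "bij v" using W_inv[OF v order_refl] by auto
  have "len (inv ?w) = len ?w" using len_inv[OF w(1)] .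
  then have Li: "Lp (inv ?w)" using maxlen_Lp[OF iw(1)] w(2) by simp
  have c: "v \<circ> ?w \<in> W" using W_comp v w(1) by blast
  have "len (v \<circ> ?w) = len (inv (v \<circ> ?w))" using len_inv[OF c] by simp
  also have "\<dots> = len (inv ?w \<circ> inv v)" using o_inv_distrib[OF iv(2) iw(2)] by simp
  finally have "len (v \<circ> ?w) + len v = n (inv ?w \<circ> inv v) + n (inv v)"
    using len_n W_comp[OF iw(1) iv(1)] len_inv[OF v] len_n[OF iv(1)] by simp
  also have "\<dots> = NN" using Lp_n[OF iw(1) Li iv(1)] .
  also have "\<dots> = len ?w" using Lp_NN[OF w(1)] longest_props len_n[OF w(1)] by simp
  finally show ?thesis .
qed


lemma comp_idD: "f \<circ> g = id \<Longrightarrow> f (g t) = t"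
  by (metis comp_apply id_apply)

lemma coef_fix: "J \<subseteq> \<Delta> \<Longrightarrow> set ws \<subseteq> J \<Longrightarrow> \<gamma> \<in> \<Delta> \<Longrightarrow> \<gamma> \<notin> J \<Longrightarrow> coef \<gamma> (word_prod ws v) = coef \<gamma> v"
proof (induction ws)
  case Nil then show ?case by simp
next
  case (Cons b ws)
  then have b: "b \<in> \<Delta>" "b \<noteq> \<gamma>" and ws: "set ws \<subseteq> J" by auto
  have "coef \<gamma> (word_prod (b # ws) v) = coef \<gamma> (refl_vec b (word_prod ws v))" by simp
  also have "\<dots> = coef \<gamma> (word_prod ws v)"
    unfolding refl_vec_def using b Cons.prems(3) by (simp add: coef_diff coef_scale coef_D)
  also have "\<dots> = coef \<gamma> v" using Cons.IH[OF Cons.prems(1) ws Cons.prems(3,4)] .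
  finally show ?case .
qed

lemma refl_inv: "a \<in> \<Delta> \<Longrightarrow> inv (refl_vec a) = refl_vec a"
  by (rule inv_unique_comp) (simp_all add: refl_comp_D)

lemma neg_first:
  assumes w: "w \<in> W" and a: "a \<in> \<Delta>" and lt: "len (refl_vec a \<circ> w) < len w"
  shows "neg (inv w a)"
proof (rule ccontr)
  assume nn: "\<not> neg (inv w a)"
  have iw: "inv w \<in> W" "bij w" using W_inv[OF w order_refl] by auto
  have ba: "bij (refl_vec a)" using W_inv[OF W_refl[OF a] order_refl] by auto
  have c: "refl_vec a \<circ> w \<in> W" using W_comp[OF W_refl[OF a] w] .
  have "inv (refl_vec a \<circ> w) = inv w \<circ> refl_vec a" using o_inv_distrib[OF ba iw(2)] refl_inv[OF a] by simp
  then have e1: "len (refl_vec a \<circ> w) = len (inv w \<circ> refl_vec a)" using len_inv[OF c] by simp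
  obtain ws where ws: "set ws \<subseteq> \<Delta>" "inv w = word_prod ws" using W_obtain[OF iw(1)] by blast
  have "pos (word_prod ws a)" using nn wa_Phi[OF ws(1) a] ws(2) by auto
  then have "n (word_prod (ws @ [a])) = n (word_prod ws) + 1" using n_step'(1)[OF ws(1) a] by blast
  moreover have "word_prod (ws @ [a]) = inv w \<circ> refl_vec a" using ws(2) by (simp only: word_prod_append word_prod_Cons word_prod_Nil comp_id)
  moreover have "inv w \<circ> refl_vec a \<in> W" using W_comp[OF iw(1) W_refl[OF a]] .
  ultimately have "len (inv w \<circ> refl_vec a) = len (inv w) + 1" using len_n iw(1) ws(2) by simp
  then show False using e1 lt len_inv[OF w] by simp
qed

lemma reduced_J:
  "J \<subseteq> \<Delta> \<Longrightarrow> set ws \<subseteq> \<Delta> \<Longrightarrow> word_prod ws \<in> refl_group J \<Longrightarrow> length ws = len (word_prod ws) \<Longrightarrow> set ws \<subseteq> J"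
proof (induction ws)
  case Nil then show ?case by simp
next
  case (Cons a ws)
  have J: "J \<subseteq> \<Delta>" and a: "a \<in> \<Delta>" and ws: "set ws \<subseteq> \<Delta>" using Cons.prems by auto
  define w' where "w' = word_prod ws"
  define w where "w = word_prod (a # ws)"
  have ww: "w = refl_vec a \<circ> w'" unfolding w_def w'_def by simp
  have wJ: "w \<in> refl_group J" unfolding w_def by (rule Cons.prems(3))
  have wW: "w \<in> W" using wJ W_mono[OF J] by blast
  have lw: "len w = length ws + 1" using Cons.prems(4) unfolding w_def by (metis Suc_eq_plus1 length_Cons)
  have l': "len w' \<le> length ws" unfolding w'_def by (rule len_le_word[OF ws])
  have sw: "refl_vec a \<circ> w = w'" unfolding ww using refl_invol_D[OF a] by (simp add: fun_eq_iff)
  have ng: "neg (inv w a)" using neg_first[OF wW a] sw l' lw by simp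
  have aJ: "a \<in> J"
  proof (rule ccontr)
    assume naJ: "a \<notin> J"
    have "inv w \<in> refl_group J" using W_inv[OF wJ J] by blast
    then obtain vs where vs: "set vs \<subseteq> J" "inv w = word_prod vs" using W_obtain by blast
    have "coef a (inv w a) = coef a a" using coef_fix[OF J vs(1) a naJ] vs(2) by simp
    also have "\<dots> = 1" using coef_D[OF a] by simp
    finally show False using ng a unfolding neg_def by force
  qed
  have w'J: "w' \<in> refl_group J" using W_comp[OF W_refl[OF aJ] wJ] sw by simp
  obtain vs where vs: "set vs \<subseteq> \<Delta>" "length vs = len w'" "w' = word_prod vs"
    using len_word[OF W_comp[OF W_refl[OF a] wW]] sw by auto
  have "w = word_prod (a # vs)" using ww vs(3) by simp
  then have "len w \<le> length (a # vs)" using len_le_word[of "a # vs"] vs(1) a by simp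
  then have "length ws = len w'" using lw l' vs(2) by simp
  then have "set ws \<subseteq> J" using Cons.IH[OF J ws] w'J w'_def by simp
  then show ?case using aJ by simp
qed

lemma main:
  assumes spl: "splitting W len X Y"
  shows "(\<exists>!x0. x0 \<in> X \<and> (\<forall>x\<in>X. left_weak \<Delta> x0 x \<longrightarrow> x = x0))
    \<and> (\<exists>!y0. y0 \<in> Y \<and> (\<forall>y\<in>Y. right_weak \<Delta> y0 y \<longrightarrow> y = y0))
    \<and> (\<forall>x0 y0. x0 \<in> X \<and> (\<forall>x\<in>X. left_weak \<Delta> x0 x \<longrightarrow> x = x0)
          \<and> y0 \<in> Y \<and> (\<forall>y\<in>Y. right_weak \<Delta> y0 y \<longrightarrow> y = y0)
          \<longrightarrow> x0 \<circ> y0 = longest \<Delta>)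
    \<and> (\<forall>J\<subseteq>\<Delta>. splitting (refl_group J) len (X \<inter> refl_group J) (Y \<inter> refl_group J))"
proof -
  have XW: "X \<subseteq> W" and YW: "Y \<subseteq> W" and bj: "bij_betw (\<lambda>(x, y). x \<circ> y) (X \<times> Y) W"
    and la: "\<forall>x\<in>X. \<forall>y\<in>Y. len (x \<circ> y) = len x + len y"
    using spl unfolding splitting_def by blast+
  have im: "(\<lambda>(x, y). x \<circ> y) ` (X \<times> Y) = W" using bj by (rule bij_betw_imp_surj_on)
  have ij: "inj_on (\<lambda>(x, y). x \<circ> y) (X \<times> Y)" using bj by (rule bij_betw_imp_inj_on)
  define w0 where "w0 = longest \<Delta>"
  have w0W: "w0 \<in> W" using longest_props w0_def by blast
  then have "w0 \<in> (\<lambda>(x, y). x \<circ> y) ` (X \<times> Y)" using im by simp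
  then obtain x0 y0 where xy0: "x0 \<in> X" "y0 \<in> Y" "x0 \<circ> y0 = w0" by (auto elim!: imageE)
  have lw0: "len w0 = len x0 + len y0" using la xy0 by blast
  have x0W': "x0 \<in> W" using XW xy0(1) by blast
  have x0W: "x0 \<in> W" "bij x0" "x0 \<circ> inv x0 = id" "inv x0 \<circ> x0 = id" "inv x0 \<in> W"
    using x0W' W_inv[OF x0W' order_refl] by simp_all
  have y0W': "y0 \<in> W" using YW xy0(2) by blast
  have y0W: "y0 \<in> W" "bij y0" "y0 \<circ> inv y0 = id" "inv y0 \<circ> y0 = id" "inv y0 \<in> W"
    using y0W' W_inv[OF y0W' order_refl] by simp_all
  have leftmax: "left_weak \<Delta> x x0" if x: "x \<in> X" for x
  proof -
    have xW': "x \<in> W" using XW x by blast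
    have xW: "x \<in> W" "bij x" "x \<circ> inv x = id" "inv x \<circ> x = id" "inv x \<in> W"
      using xW' W_inv[OF xW' order_refl] by simp_all
    define z where "z = x0 \<circ> inv x"
    have zW: "z \<in> W" unfolding z_def using W_comp x0W xW by blast
    have zx: "x0 = z \<circ> x" unfolding z_def using comp_idD[OF xW(4)] by (simp add: fun_eq_iff)
    define v where "v = inv (x \<circ> y0)"
    have xyW: "x \<circ> y0 \<in> W" using W_comp xW y0W by blast
    have vW: "v \<in> W" unfolding v_def using W_inv[OF xyW order_refl] by blast
    have "v = inv y0 \<circ> inv x" unfolding v_def using o_inv_distrib[OF xW(2) y0W(2)] .
    then have "w0 \<circ> v = z" unfolding z_def using xy0(3)[symmetric] comp_idD[OF y0W(3)]
      by (simp add: fun_eq_iff)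
    then have "len z + len v = len w0" using len_w0_left[OF vW] w0_def by simp
    moreover have "len v = len x + len y0" unfolding v_def using len_inv[OF xyW] la x xy0(2) by simp
    ultimately have "len x0 = len z + len x" using lw0 by simp
    then show ?thesis unfolding left_weak_def using zW zx by blast
  qed
  have rightmax: "right_weak \<Delta> y y0" if y: "y \<in> Y" for y
  proof -
    have yW': "y \<in> W" using YW y by blast
    have yW: "y \<in> W" "bij y" "y \<circ> inv y = id" "inv y \<circ> y = id" "inv y \<in> W"
      using yW' W_inv[OF yW' order_refl] by simp_all
    define z where "z = inv y \<circ> y0"
    have zW: "z \<in> W" unfolding z_def using W_comp y0W yW by blast
    have zy: "y0 = y \<circ> z" unfolding z_def using comp_idD[OF yW(3)] by (simp add: fun_eq_iff)
    have xyW: "x0 \<circ> y \<in> W" using W_comp x0W yW by blast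
    define v where "v = inv (x0 \<circ> y)"
    have vW: "v \<in> W" unfolding v_def using W_inv[OF xyW order_refl] by blast
    have "v = inv y \<circ> inv x0" unfolding v_def using o_inv_distrib[OF x0W(2) yW(2)] .
    then have "v \<circ> w0 = z" unfolding z_def using xy0(3)[symmetric] comp_idD[OF x0W(4)]
      by (simp add: fun_eq_iff)
    then have "len z + len v = len w0" using len_w0_right[OF vW] w0_def by simp
    moreover have "len v = len x0 + len y" unfolding v_def using len_inv[OF xyW] la y xy0(1) by simp
    ultimately have "len y0 = len z + len y" using lw0 by simp
    then show ?thesis unfolding right_weak_def using zW zy by auto
  qed
  have x0max: "x = x0" if x: "x \<in> X" "left_weak \<Delta> x0 x" for x
  proof -
    obtain z where z: "z \<in> W" "x = z \<circ> x0" "len x = len z + len x0" using x(2) unfolding left_weak_def by blast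
    obtain z' where z': "len x0 = len z' + len x" using leftmax[OF x(1)] unfolding left_weak_def by blast
    have "len z = 0" using z(3) z' by simp
    then have "z = id" using len_zero z(1) by blast
    then show ?thesis using z(2) by simp
  qed
  have y0max: "y = y0" if y: "y \<in> Y" "right_weak \<Delta> y0 y" for y
  proof -
    obtain z where z: "z \<in> W" "y = y0 \<circ> z" "len y = len y0 + len z" using y(2) unfolding right_weak_def by blast
    obtain z' where z': "len y0 = len y + len z'" using rightmax[OF y(1)] unfolding right_weak_def by blast
    have "len z = 0" using z(3) z' by simp
    then have "z = id" using len_zero z(1) by blast
    then show ?thesis using z(2) by simp
  qed
  have ux: "x1 = x0" if "x1 \<in> X" "\<forall>x\<in>X. left_weak \<Delta> x1 x \<longrightarrow> x = x1" for x1
    using that leftmax xy0(1) by blast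
  have uy: "y1 = y0" if "y1 \<in> Y" "\<forall>y\<in>Y. right_weak \<Delta> y1 y \<longrightarrow> y = y1" for y1
    using that rightmax xy0(2) by blast
  have P1: "\<exists>!x0. x0 \<in> X \<and> (\<forall>x\<in>X. left_weak \<Delta> x0 x \<longrightarrow> x = x0)"
  proof (rule ex1I[of _ x0])
    show "x0 \<in> X \<and> (\<forall>x\<in>X. left_weak \<Delta> x0 x \<longrightarrow> x = x0)" using xy0(1) x0max by blast
  next
    fix x1 assume "x1 \<in> X \<and> (\<forall>x\<in>X. left_weak \<Delta> x1 x \<longrightarrow> x = x1)"
    then show "x1 = x0" using ux by blast
  qed
  have P2: "\<exists>!y0. y0 \<in> Y \<and> (\<forall>y\<in>Y. right_weak \<Delta> y0 y \<longrightarrow> y = y0)"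
  proof (rule ex1I[of _ y0])
    show "y0 \<in> Y \<and> (\<forall>y\<in>Y. right_weak \<Delta> y0 y \<longrightarrow> y = y0)" using xy0(2) y0max by blast
  next
    fix y1 assume "y1 \<in> Y \<and> (\<forall>y\<in>Y. right_weak \<Delta> y1 y \<longrightarrow> y = y1)"
    then show "y1 = y0" using uy by blast
  qed
  have P3: "\<forall>x1 y1. x1 \<in> X \<and> (\<forall>x\<in>X. left_weak \<Delta> x1 x \<longrightarrow> x = x1)
          \<and> y1 \<in> Y \<and> (\<forall>y\<in>Y. right_weak \<Delta> y1 y \<longrightarrow> y = y1)
          \<longrightarrow> x1 \<circ> y1 = longest \<Delta>"
  proof (intro allI impI)
    fix x1 y1 assume h: "x1 \<in> X \<and> (\<forall>x\<in>X. left_weak \<Delta> x1 x \<longrightarrow> x = x1)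
          \<and> y1 \<in> Y \<and> (\<forall>y\<in>Y. right_weak \<Delta> y1 y \<longrightarrow> y = y1)"
    have "x1 = x0" using h ux by blast
    moreover have "y1 = y0" using h uy by blast
    ultimately show "x1 \<circ> y1 = longest \<Delta>" using xy0(3) w0_def by simp
  qed
  have P4: "splitting (refl_group J) len (X \<inter> refl_group J) (Y \<inter> refl_group J)" if J: "J \<subseteq> \<Delta>" for J
  proof -
    have inj: "inj_on (\<lambda>(x, y). x \<circ> y) ((X \<inter> refl_group J) \<times> (Y \<inter> refl_group J))"
      by (rule inj_on_subset[OF ij]) blast
    have sub: "(\<lambda>(x, y). x \<circ> y) ` ((X \<inter> refl_group J) \<times> (Y \<inter> refl_group J)) \<subseteq> refl_group J"
    proof
      fix w assume "w \<in> (\<lambda>(x, y). x \<circ> y) ` ((X \<inter> refl_group J) \<times> (Y \<inter> refl_group J))"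
      then obtain x y where "x \<in> refl_group J" "y \<in> refl_group J" "w = x \<circ> y" by auto
      then show "w \<in> refl_group J" using W_comp by blast
    qed
    have sup: "refl_group J \<subseteq> (\<lambda>(x, y). x \<circ> y) ` ((X \<inter> refl_group J) \<times> (Y \<inter> refl_group J))"
    proof
      fix w assume wJ: "w \<in> refl_group J"
      then have "w \<in> W" using W_mono[OF J] by blast
      then have "w \<in> (\<lambda>(x, y). x \<circ> y) ` (X \<times> Y)" using im by simp
      then obtain x y where xy: "x \<in> X" "y \<in> Y" "w = x \<circ> y" by auto
      obtain xs where xs: "set xs \<subseteq> \<Delta>" "length xs = len x" "x = word_prod xs" using len_word XW xy(1) by blast
      obtain ys where ys: "set ys \<subseteq> \<Delta>" "length ys = len y" "y = word_prod ys" using len_word YW xy(2) by blast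
      have e: "word_prod (xs @ ys) = w" using xs ys xy by (simp add: word_prod_append)
      have "length (xs @ ys) = len (word_prod (xs @ ys))" using e la xy xs ys by simp
      moreover have "set (xs @ ys) \<subseteq> \<Delta>" using xs(1) ys(1) by simp
      moreover have "word_prod (xs @ ys) \<in> refl_group J" using e wJ by simp
      ultimately have "set (xs @ ys) \<subseteq> J" using reduced_J[OF J] by blast
      then have "x \<in> refl_group J" "y \<in> refl_group J" using xs(3) ys(3) unfolding refl_group_def by auto
      then have "(x, y) \<in> (X \<inter> refl_group J) \<times> (Y \<inter> refl_group J)" using xy by simp
      then show "w \<in> (\<lambda>(x, y). x \<circ> y) ` ((X \<inter> refl_group J) \<times> (Y \<inter> refl_group J))"
        using xy(3) by (simp add: image_iff) blast
    qed
    have "(\<lambda>(x, y). x \<circ> y) ` ((X \<inter> refl_group J) \<times> (Y \<inter> refl_group J)) = refl_group J"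
      using sub sup by (rule equalityI)
    moreover have "\<forall>x\<in>X \<inter> refl_group J. \<forall>y\<in>Y \<inter> refl_group J. len (x \<circ> y) = len x + len y" using la by blast
    moreover have "X \<inter> refl_group J \<subseteq> refl_group J" "Y \<inter> refl_group J \<subseteq> refl_group J" by auto
    ultimately show ?thesis unfolding splitting_def bij_betw_def using inj by blast
  qed
  have P4': "\<forall>J\<subseteq>\<Delta>. splitting (refl_group J) len (X \<inter> refl_group J) (Y \<inter> refl_group J)"
    using P4 by blast
  show ?thesis by (intro conjI P1 P2 P3 P4')
qed

end

theorem proposition6p1:
  fixes \<Phi> \<Delta> :: "'a::euclidean_space set"
    and X Y :: "('a \<Rightarrow> 'a) set"
  assumes "root_system \<Phi>"
    and "simple_roots \<Phi> \<Delta>"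
    and "splitting (refl_group \<Delta>) (cox_len \<Delta>) X Y"
  shows "(\<exists>!x0. x0 \<in> X \<and> (\<forall>x\<in>X. left_weak \<Delta> x0 x \<longrightarrow> x = x0))
    \<and> (\<exists>!y0. y0 \<in> Y \<and> (\<forall>y\<in>Y. right_weak \<Delta> y0 y \<longrightarrow> y = y0))
    \<and> (\<forall>x0 y0. x0 \<in> X \<and> (\<forall>x\<in>X. left_weak \<Delta> x0 x \<longrightarrow> x = x0)
          \<and> y0 \<in> Y \<and> (\<forall>y\<in>Y. right_weak \<Delta> y0 y \<longrightarrow> y = y0)
          \<longrightarrow> x0 \<circ> y0 = longest \<Delta>)
    \<and> (\<forall>J\<subseteq>\<Delta>. splitting (refl_group J) (cox_len \<Delta>) (X \<inter> refl_group J) (Y \<inter> refl_group J))"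
proof -
  interpret weyl \<Phi> \<Delta> by (rule weyl.intro) (rule assms(1), rule assms(2))
  show ?thesis by (rule main[OF assms(3)])
qed

end
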